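(* Let $n,m\ge1$, $C:\{0,1\}^n\to\{0,1\}^m$, $\varepsilon\in(0,1)$, $\tilde\varepsilon=(4/100)^2\varepsilon^2$, $t=\lfloor n/\tilde\varepsilon\rfloor$, and $\alpha>1$ such that $j^*$ (defined below) exists. Suppose $$\Pr_{y\leftarrow\mathcal{D}^C}\big[\mathcal{D}^C(y)\in(1\pm 100\sqrt{\tilde\varepsilon})\,\alpha2^{-m}\big]\le\tilde\varepsilon^{1/4}.$$ Let $c=\lceil 25/\sqrt{\tilde\varepsilon}\rceil$. Then (i) $2^{-(j^*-c)\tilde\varepsilon}\le 2^{28\sqrt{\tilde\varepsilon}}\alpha2^{-m}$ and $2^{-(j^*+c)\tilde\varepsilon}\ge 2^{-28\sqrt{\tilde\varepsilon}}\alpha2^{-m}$; (ii) $\sum_{j=j^*-c}^{j^*+c} h^C_j\le\tilde\varepsilon^{1/4}$; (iii) $\sum_{j\le j^*} h^C_j\in[g_H\pm\tilde\varepsilon^{1/4}]$; (iv) $\frac{1}{2^m}\sum_{j\le j^*}h^C_j\,2^{j\tilde\varepsilon}\in[g_{UH}\pm 4\tilde\varepsilon^{1/4}]$.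
   Context: For $C:\{0,1\}^n\to\{0,1\}^m$, $\mathcal{D}^C$ is the distribution on $\{0,1\}^m$ with $\mathcal{D}^C(y)=\Pr_{r\leftarrow\{0,1\}^n}[C(r)=y]$ ($r$ uniform). The $(\tilde\varepsilon,t)$-histogram of $\mathcal{D}^C$ is $h^C=(h^C_0,\dots,h^C_t)$ with $h^C_i=\sum_{y\in\mathcal{B}_i}\mathcal{D}^C(y)$, where $\mathcal{B}_i=\{y:\mathcal{D}^C(y)\in(2^{-(i+1)\tilde\varepsilon},2^{-i\tilde\varepsilon}]\}$; by convention $h^C_j=0$ for integers $j\notin\{0,\dots,t\}$. $j^*=\max\{j\in\mathbb{Z}_{\ge0}: 2^{-(j+1)\tilde\varepsilon}>\alpha2^{-m}\}$. $g_H=\Pr_{y\leftarrow\mathcal{D}^C}[\mathcal{D}^C(y)\ge\alpha2^{-m}]$ and $g_{UH}=\Pr_{y\leftarrow\{0,1\}^m\text{ uniform}}[\mathcal{D}^C(y)\ge\alpha2^{-m}]$. Notation: $[a\pm b]=[a-b,a+b]$ and $(1\pm\delta)x=[(1-\delta)x,(1+\delta)x]$. *)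

theory Defs
  imports Complex_Main
begin

definition bits :: "nat \<Rightarrow> bool list set" where
  "bits k = {xs. length xs = k}"

definition distr :: "nat \<Rightarrow> (bool list \<Rightarrow> bool list) \<Rightarrow> bool list \<Rightarrow> real" where
  "distr n C y = real (card {r \<in> bits n. C r = y}) / 2 ^ n"

definition bucket :: "nat \<Rightarrow> nat \<Rightarrow> (bool list \<Rightarrow> bool list) \<Rightarrow> real \<Rightarrow> int \<Rightarrow> bool list set" where
  "bucket n m C e i =
     {y \<in> bits m. 2 powr (- (real_of_int i + 1) * e) < distr n C y \<and>
                  distr n C y \<le> 2 powr (- real_of_int i * e)}"

definition hist :: "nat \<Rightarrow> nat \<Rightarrow> (bool list \<Rightarrow> bool list) \<Rightarrow> real \<Rightarrow> nat \<Rightarrow> int \<Rightarrow> real" where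
  "hist n m C e t j =
     (if 0 \<le> j \<and> j \<le> int t then (\<Sum>y\<in>bucket n m C e j. distr n C y) else 0)"

definition jstar :: "nat \<Rightarrow> real \<Rightarrow> real \<Rightarrow> int" where
  "jstar m e \<alpha> = (GREATEST j::int. 0 \<le> j \<and> 2 powr (- (real_of_int j + 1) * e) > \<alpha> * 2 powr (- real m))"

definition gH :: "nat \<Rightarrow> nat \<Rightarrow> (bool list \<Rightarrow> bool list) \<Rightarrow> real \<Rightarrow> real" where
  "gH n m C \<alpha> = (\<Sum>y\<in>{y \<in> bits m. distr n C y \<ge> \<alpha> * 2 powr (- real m)}. distr n C y)"

definition gUH :: "nat \<Rightarrow> nat \<Rightarrow> (bool list \<Rightarrow> bool list) \<Rightarrow> real \<Rightarrow> real" where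
  "gUH n m C \<alpha> = real (card {y \<in> bits m. distr n C y \<ge> \<alpha> * 2 powr (- real m)}) / 2 ^ m"

end

theory Submission
  imports Defs
begin

lemma bits_eq: "bits k = {xs. set xs \<subseteq> (UNIV::bool set) \<and> length xs = k}"
  by (auto simp: bits_def)

lemma finite_bits[simp]: "finite (bits k)"
  unfolding bits_eq by (rule finite_lists_length_eq) simp

lemma card_bits: "card (bits k) = 2 ^ k"
  unfolding bits_eq by (subst card_lists_length_eq) auto

lemma distr_nonneg: "distr n C y \<ge> 0"
  by (simp add: distr_def)

lemma distr_le1: "distr n C y \<le> 1"
proof -
  have "card {r \<in> bits n. C r = y} \<le> card (bits n)" by (rule card_mono) auto
  then show ?thesis by (simp add: distr_def card_bits)
qed

lemma distr_pos: "distr n C y > 0 \<Longrightarrow> distr n C y \<ge> 2 powr (- real n)"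
proof -
  assume a: "distr n C y > 0"
  have "card {r \<in> bits n. C r = y} \<noteq> 0"
  proof
    assume "card {r \<in> bits n. C r = y} = 0"
    then have "distr n C y = 0" by (simp add: distr_def)
    with a show False by simp
  qed
  then have "card {r \<in> bits n. C r = y} \<ge> 1" by linarith
  then show ?thesis by (simp add: distr_def powr_minus powr_realpow divide_simps)
qed

lemma two_powr_ge: "1 + x * ln 2 \<le> 2 powr (x::real)"
  using exp_ge_add_one_self[of "x * ln 2"] by (simp add: powr_def mult.commute)

lemma ln2_le1: "ln (2::real) \<le> 1"
  using ln_le_minus_one[of 2] by simp

lemma two_powr_up: assumes "0 \<le> (s::real)" "s \<le> 1/25" shows "2 powr (28*s) \<le> 1 + 100*s"
proof -
  have y: "14*s*ln 2 \<le> 14 * s" using ln2_le1 assms by (simp add: mult_left_le)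
  have y0: "0 \<le> 14*s*ln 2" using assms by simp
  have "2 powr (28*s) = exp (14*s*ln 2) * exp (14*s*ln 2)" by (simp add: powr_def mult.commute exp_add[symmetric])
  also have "\<dots> \<le> (1 + 14*s + (14*s)^2) * (1 + 14*s + (14*s)^2)"
  proof -
    have "exp (14*s*ln 2) \<le> 1 + 14*s*ln 2 + (14*s*ln 2)^2"
      by (rule exp_bound) (use y y0 assms in linarith)+
    also have "\<dots> \<le> 1 + 14*s + (14*s)^2"
      using y y0 by (intro add_mono power_mono) auto
    finally have e: "exp (14*s*ln 2) \<le> 1 + 14*s + (14*s)^2" .
    show ?thesis by (rule mult_mono[OF e e]) (use assms in auto)
  qed
  also have "\<dots> \<le> 1 + 100*s"
  proof -
    have a2: "s*s \<le> s/25" using mult_left_mono[OF assms(2) assms(1)] by simp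
    have a3: "s*s*s \<le> s/625" using a2 assms mult_right_mono[OF a2, of s] by simp
    have a4: "s*s*s*s \<le> s/15625" using a2 a3 assms mult_right_mono[OF a3, of s] by simp
    have "(1 + 14*s + (14*s)^2) * (1 + 14*s + (14*s)^2) = 1 + 28*s + 588*(s*s) + 5488*(s*s*s) + 38416*(s*s*s*s)"
      by (simp add: power2_eq_square algebra_simps)
    then show ?thesis using a2 a3 a4 assms by linarith
  qed
  finally show ?thesis .
qed


lemma jstar_props:
  fixes m :: nat and e \<alpha> :: real
  assumes e: "e > 0" and al: "\<alpha> > 1"
    and ex: "\<exists>j::int. 0 \<le> j \<and> 2 powr (- (real_of_int j + 1) * e) > \<alpha> * 2 powr (- real m)"
  shows "0 \<le> jstar m e \<alpha>"
    and "2 powr (- (real_of_int (jstar m e \<alpha>) + 1) * e) > \<alpha> * 2 powr (- real m)"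
    and "2 powr (- (real_of_int (jstar m e \<alpha>) + 2) * e) \<le> \<alpha> * 2 powr (- real m)"
proof -
  define P where "P = (\<lambda>j::int. 0 \<le> j \<and> 2 powr (- (real_of_int j + 1) * e) > \<alpha> * 2 powr (- real m))"
  define Q where "Q = (\<lambda>k::nat. P (int k))"
  obtain j0 where j0: "P j0" using ex unfolding P_def by blast
  have Qj0: "Q (nat j0)" using j0 by (simp add: Q_def P_def)
  have bnd: "k \<le> nat \<lceil>real m / e\<rceil>" if "Q k" for k
  proof -
    have "2 powr (- real m) \<le> \<alpha> * 2 powr (- real m)" using al by simp
    also have "\<dots> < 2 powr (- (real k + 1) * e)" using that by (simp add: Q_def P_def)
    finally have "- real m < - (real k + 1) * e" by simp
    then have "(real k + 1) * e < real m" by (simp add: algebra_simps)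
    then have "real k < real m / e" using e by (simp add: field_simps)
    then have "real k \<le> real_of_int \<lceil>real m / e\<rceil>" by linarith
    then show ?thesis by linarith
  qed
  have "\<exists>x. Q x \<and> (\<forall>y. Q y \<longrightarrow> y \<le> x)"
  proof -
    have b': "\<forall>y. Q y \<longrightarrow> y \<le> nat \<lceil>real m / e\<rceil>" using bnd by blast
    show ?thesis by (rule Nat.ex_has_greatest_nat[OF Qj0 b'])
  qed
  then obtain k0 where k0: "Q k0" "\<And>y. Q y \<Longrightarrow> y \<le> k0" by blast
  have J: "jstar m e \<alpha> = int k0"
    unfolding jstar_def
  proof (rule Greatest_equality)
    show "0 \<le> int k0 \<and> \<alpha> * 2 powr (- real m) < 2 powr (- (real_of_int (int k0) + 1) * e)"
      using k0(1) by (simp add: Q_def P_def)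
  next
    fix y :: int assume "0 \<le> y \<and> \<alpha> * 2 powr (- real m) < 2 powr (- (real_of_int y + 1) * e)"
    then have "Q (nat y)" "y \<ge> 0" by (auto simp: Q_def P_def)
    then show "y \<le> int k0" using k0(2)[of "nat y"] by linarith
  qed
  show "0 \<le> jstar m e \<alpha>" using J by simp
  show "2 powr (- (real_of_int (jstar m e \<alpha>) + 1) * e) > \<alpha> * 2 powr (- real m)"
    using J k0(1) by (simp add: Q_def P_def)
  have "\<not> Q (Suc k0)" using k0(2)[of "Suc k0"] by auto
  then show "2 powr (- (real_of_int (jstar m e \<alpha>) + 2) * e) \<le> \<alpha> * 2 powr (- real m)"
    using J by (simp add: Q_def P_def add_ac)
qed


lemma bucket_sub: "bucket n m C e j \<subseteq> bits m" by (auto simp: bucket_def)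
lemma finite_bucket[simp]: "finite (bucket n m C e j)"
  using finite_subset[OF bucket_sub] by simp

lemma bucket_disj:
  assumes e: "e > 0" and ij: "i \<noteq> j"
  shows "bucket n m C e i \<inter> bucket n m C e j = {}"
proof -
  have *: "bucket n m C e i \<inter> bucket n m C e j = {}" if "i < j" for i j :: int
  proof (rule ccontr)
    assume "bucket n m C e i \<inter> bucket n m C e j \<noteq> {}"
    then obtain y where y: "y \<in> bucket n m C e i" "y \<in> bucket n m C e j" by blast
    have "2 powr (- (real_of_int i + 1) * e) < distr n C y" using y(1) by (simp add: bucket_def)
    also have "\<dots> \<le> 2 powr (- real_of_int j * e)" using y(2) by (simp add: bucket_def)
    finally have "- (real_of_int i + 1) * e < - real_of_int j * e" by simp
    then have "real_of_int j * e < (real_of_int i + 1) * e" by (simp add: algebra_simps)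
    then have "real_of_int j < real_of_int i + 1" using e by (simp add: mult_less_cancel_right)
    with that show False by linarith
  qed
  show ?thesis using ij *[of i j] *[of j i] by (cases "i < j") (auto simp: Int_commute)
qed

lemma bucket_mem_iff: "y \<in> bucket n m C e j \<longleftrightarrow> y \<in> bits m \<and> 2 powr (- (real_of_int j + 1) * e) < distr n C y \<and>
                  distr n C y \<le> 2 powr (- real_of_int j * e)"
  by (simp add: bucket_def)


lemma powr_split: "(x::real) = y + z \<Longrightarrow> (b::real) powr x = b powr y * b powr z"
  by (simp add: powr_add)

lemma expo_mono: "(x::real) \<le> y \<Longrightarrow> 0 \<le> e \<Longrightarrow> 2 powr (- y * e) \<le> 2 powr (- x * e)"
  by (simp add: mult_right_mono)

theorem mainTheorem2:
  fixes n m :: nat and C :: "bool list \<Rightarrow> bool list" and \<epsilon> \<alpha> et :: real and t :: nat and c :: int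
  assumes "n \<ge> 1" and "m \<ge> 1"
    and C_range: "\<forall>r\<in>bits n. C r \<in> bits m"
    and "0 < \<epsilon>" and "\<epsilon> < 1"
    and et_def: "et = (4/100)^2 * \<epsilon>^2"
    and t_def: "t = nat \<lfloor>real n / et\<rfloor>"
    and "\<alpha> > 1"
    and jstar_exists: "\<exists>j::int. 0 \<le> j \<and> 2 powr (- (real_of_int j + 1) * et) > \<alpha> * 2 powr (- real m)"
    and hyp: "(\<Sum>y\<in>{y \<in> bits m. (1 - 100 * sqrt et) * (\<alpha> * 2 powr (- real m)) \<le> distr n C y \<and>
                                  distr n C y \<le> (1 + 100 * sqrt et) * (\<alpha> * 2 powr (- real m))}.
                 distr n C y) \<le> et powr (1/4)"
    and c_def: "c = \<lceil>25 / sqrt et\<rceil>"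
  shows "2 powr (- real_of_int (jstar m et \<alpha> - c) * et) \<le> 2 powr (28 * sqrt et) * (\<alpha> * 2 powr (- real m))
       \<and> 2 powr (- real_of_int (jstar m et \<alpha> + c) * et) \<ge> 2 powr (- 28 * sqrt et) * (\<alpha> * 2 powr (- real m))
       \<and> (\<Sum>j\<in>{jstar m et \<alpha> - c .. jstar m et \<alpha> + c}. hist n m C et t j) \<le> et powr (1/4)
       \<and> \<bar>(\<Sum>j\<in>{0 .. jstar m et \<alpha>}. hist n m C et t j) - gH n m C \<alpha>\<bar> \<le> et powr (1/4)
       \<and> \<bar>(1 / 2 ^ m) * (\<Sum>j\<in>{0 .. jstar m et \<alpha>}. hist n m C et t j * 2 powr (real_of_int j * et))
           - gUH n m C \<alpha>\<bar> \<le> 4 * et powr (1/4)"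
proof -
  define s where "s = sqrt et"
  define a where "a = \<alpha> * 2 powr (- real m)"
  define J where "J = jstar m et \<alpha>"
  define e4 where "e4 = et powr (1/4)"
  define D where "D = distr n C"
  define B where "B = bucket n m C et"
  define H where "H = {y \<in> bits m. (1 - 100 * s) * a \<le> D y \<and> D y \<le> (1 + 100 * s) * a}"
  have "et = (4/100*\<epsilon>)^2" by (simp add: et_def power2_eq_square)
  then have s_eq: "s = 4/100 * \<epsilon>" unfolding s_def using \<open>0 < \<epsilon>\<close> by simp
  have s0: "0 < s" and s1: "s \<le> 1/25" using s_eq \<open>0 < \<epsilon>\<close> \<open>\<epsilon> < 1\<close> by auto
  have et_s: "et = s * s" unfolding s_def using real_sqrt_mult_self[of et] et_def by simp
  have et0: "0 < et" using s0 et_s by simp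
  have et_le_s: "et \<le> s" using et_s s0 s1 by (simp add: mult_left_le)
  have et1: "et < 1" using et_le_s s1 by simp
  have e4_ge: "et \<le> e4" unfolding e4_def
    using powr_mono'[of "1/4" 1 et] et0 et1 by simp
  have a0: "0 < a" unfolding a_def using \<open>\<alpha> > 1\<close> by simp
  have a_ge: "2 powr (- real m) \<le> a" unfolding a_def using \<open>\<alpha> > 1\<close> by simp
  have hypH: "sum D H \<le> e4" using hyp unfolding H_def D_def e4_def s_def a_def .
  have finH: "finite H" unfolding H_def by simp
  have D0: "\<And>y. 0 \<le> D y" unfolding D_def by (rule distr_nonneg)
  have J0: "0 \<le> J" and J1: "2 powr (- (real_of_int J + 1) * et) > a"
    and J2: "2 powr (- (real_of_int J + 2) * et) \<le> a"
    using jstar_props[OF et0 \<open>\<alpha> > 1\<close> jstar_exists] unfolding J_def a_def by auto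
  have c_lo: "25 * s \<le> c * et" and c_hi: "c * et \<le> 25 * s + et"
  proof -
    have h1: "25 / s \<le> c" and h2: "c \<le> 25 / s + 1" unfolding c_def s_def by linarith+
    have "25 / s * et \<le> c * et" by (rule mult_right_mono[OF h1]) (use et0 in simp)
    moreover have "c * et \<le> (25 / s + 1) * et" by (rule mult_right_mono[OF h2]) (use et0 in simp)
    ultimately have "25 / s * et \<le> c * et" "c * et \<le> (25 / s + 1) * et" by auto
    moreover have "25 / s * et = 25 * s" "(25 / s + 1) * et = 25 * s + et"
      using s0 et_s by (simp_all add: field_simps)
    ultimately show "25 * s \<le> c * et" "c * et \<le> 25 * s + et" by auto
  qed
  have i1: "2 powr (- real_of_int (J - c) * et) \<le> 2 powr (28 * s) * a"
  proof -
    have "2 powr (- real_of_int (J - c) * et) = 2 powr (- (real_of_int J + 2) * et) * 2 powr ((c + 2) * et)"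
      by (rule powr_split) (simp add: algebra_simps)
    also have "\<dots> \<le> a * 2 powr (28 * s)"
    proof (rule mult_mono)
      show "2 powr ((c + 2) * et) \<le> 2 powr (28 * s)" using c_hi et_le_s by (simp add: algebra_simps)
    qed (use J2 a0 in auto)
    finally show ?thesis by (simp add: mult.commute)
  qed
  have i2: "2 powr (- real_of_int (J + c) * et) \<ge> 2 powr (- 28 * s) * a"
  proof -
    have "2 powr (- real_of_int (J + c) * et) = 2 powr (- (real_of_int J + 1) * et) * 2 powr ((1 - c) * et)"
      by (rule powr_split) (simp add: algebra_simps)
    also have "\<dots> \<ge> a * 2 powr (- 28 * s)"
    proof (rule mult_mono)
      show "2 powr (- 28 * s) \<le> 2 powr ((1 - c) * et)" using c_hi s0 et0 by (simp add: algebra_simps)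
    qed (use J1 a0 in auto)
    finally show ?thesis by (simp add: mult.commute)
  qed
  have hist_le: "hist n m C et t j \<le> sum D (B j)" for j
    unfolding hist_def B_def D_def using D0[unfolded D_def] by (auto intro: sum_nonneg)
  have tbig: "real n < (real t + 1) * et"
  proof -
    have "real t = real_of_int \<lfloor>real n / et\<rfloor>" unfolding t_def using et0 by simp
    then have "real n / et < real t + 1" by linarith
    then show ?thesis using et0 by (simp add: field_simps)
  qed
  have B_empty: "B j = {}" if "j > int t" for j
  proof (rule ccontr)
    assume "B j \<noteq> {}"
    then obtain y where y: "y \<in> B j" by blast
    have lo: "2 powr (- (real_of_int j + 1) * et) < D y" and hi: "D y \<le> 2 powr (- real_of_int j * et)"
      using y unfolding B_def D_def bucket_def by auto
    have "0 < D y" using lo powr_gt_zero[of 2 "- (real_of_int j + 1) * et"] by linarith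
    then have "2 powr (- real n) \<le> D y" unfolding D_def by (rule distr_pos)
    also have "\<dots> \<le> 2 powr (- real_of_int j * et)" by (rule hi)
    also have "\<dots> \<le> 2 powr (- (real t + 1) * et)"
    proof -
      have "real t + 1 \<le> real_of_int j" using that by linarith
      then show ?thesis by (rule expo_mono) (use et0 in auto)
    qed
    finally have "- real n \<le> - (real t + 1) * et" by simp
    with tbig show False by simp
  qed
  have hist_eq: "hist n m C et t j = sum D (B j)" if "0 \<le> j" for j
    using that B_empty[of j] unfolding hist_def B_def D_def by (cases "j \<le> int t") auto
  have Bdisj: "\<forall>i\<in>I. \<forall>j\<in>I. i \<noteq> j \<longrightarrow> B i \<inter> B j = {}" for I
    unfolding B_def using bucket_disj[OF et0] by blast
  have finB: "\<forall>i\<in>I. finite (B i)" for I unfolding B_def by simp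
  have Bsub: "B j \<subseteq> bits m" for j unfolding B_def by (rule bucket_sub)
  have ii: "(\<Sum>j\<in>{J - c .. J + c}. hist n m C et t j) \<le> e4"
  proof -
    have "(\<Sum>j\<in>{J - c .. J + c}. hist n m C et t j) \<le> (\<Sum>j\<in>{J - c .. J + c}. sum D (B j))"
      by (rule sum_mono) (rule hist_le)
    also have "\<dots> = sum D (\<Union>(B ` {J - c .. J + c}))"
      by (rule sum.UNION_disjoint[symmetric, OF _ finB Bdisj]) simp
    also have "\<dots> \<le> sum D H"
    proof (rule sum_mono2[OF finH])
      show "\<Union>(B ` {J - c .. J + c}) \<subseteq> H"
      proof
        fix y assume "y \<in> \<Union>(B ` {J - c .. J + c})"
        then obtain j where j: "j \<in> {J - c .. J + c}" "y \<in> B j" by blast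
        have lo: "2 powr (- (real_of_int j + 1) * et) < D y" and hi: "D y \<le> 2 powr (- real_of_int j * et)"
          and ym: "y \<in> bits m"
          using j(2) unfolding B_def D_def bucket_def by auto
        have "D y \<le> 2 powr (- real_of_int (J - c) * et)"
        proof -
          have "real_of_int (J - c) \<le> real_of_int j" using j(1) by simp
          then have "2 powr (- real_of_int j * et) \<le> 2 powr (- real_of_int (J - c) * et)"
            by (rule expo_mono) (use et0 in auto)
          then show ?thesis using hi by linarith
        qed
        also have "\<dots> \<le> 2 powr (28 * s) * a" by (rule i1)
        also have "\<dots> \<le> (1 + 100 * s) * a" using two_powr_up[of s] s0 s1 a0 by simp
        finally have up: "D y \<le> (1 + 100 * s) * a" .
        have "(1 - 100 * s) * a \<le> 2 powr (- 28 * s - et) * a"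
        proof -
          have "(- 28 * s - et) \<le> (- 28 * s - et) * ln 2"
          proof -
            have h: "(28*s+et)*ln 2 \<le> 28*s+et" by (rule mult_left_le) (use ln2_le1 s0 et0 in auto)
            have "(- 28 * s - et) * ln 2 = - ((28*s+et)*ln 2)" by (simp add: algebra_simps)
            then show ?thesis using h by linarith
          qed
          then have "1 - 100 * s \<le> 2 powr (- 28 * s - et)"
            using two_powr_ge[of "- 28 * s - et"] et_le_s s0 by linarith
          then show ?thesis using a0 by simp
        qed
        also have "\<dots> = 2 powr (- 28 * s) * a * 2 powr (- et)" 
        proof -
          have "2 powr (- 28 * s - et) = 2 powr (- 28 * s) * 2 powr (- et)" by (rule powr_split) simp
          then show ?thesis by simp
        qed
        also have "\<dots> \<le> 2 powr (- real_of_int (J + c) * et) * 2 powr (- et)"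
          using i2 by simp
        also have "\<dots> = 2 powr (- (real_of_int (J + c) + 1) * et)" by (rule powr_split[symmetric]) (simp add: algebra_simps)
        also have "\<dots> \<le> 2 powr (- (real_of_int j + 1) * et)"
        proof -
          have "real_of_int j + 1 \<le> real_of_int (J + c) + 1" using j(1) by simp
          then show ?thesis by (rule expo_mono) (use et0 in auto)
        qed
        also have "\<dots> < D y" by (rule lo)
        finally show "y \<in> H" unfolding H_def using up ym by simp
      qed
    qed (use D0 in auto)
    also have "\<dots> \<le> e4" by (rule hypH)
    finally show ?thesis .
  qed
  define S where "S = \<Union>(B ` {0..J})"
  define G where "G = {y \<in> bits m. D y \<ge> a}"
  have finS: "finite S" unfolding S_def using finB by auto
  have finG: "finite G" unfolding G_def by simp
  have cover: "y \<in> S" if ym: "y \<in> bits m" and yD: "2 powr (-(real_of_int J + 1)*et) < D y" for y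
  proof -
    define P where "P = (\<lambda>k::nat. 2 powr (-(real k + 1)*et) < D y)"
    have PJ: "P (nat J)" using yD J0 by (simp add: P_def)
    define k where "k = (LEAST k. P k)"
    have Pk: "P k" unfolding k_def by (rule LeastI[of P, OF PJ])
    have kJ: "k \<le> nat J" unfolding k_def by (rule Least_le[of P, OF PJ])
    have up: "D y \<le> 2 powr (- real k * et)"
    proof (cases k)
      case 0 then show ?thesis using distr_le1 by (simp add: D_def)
    next
      case (Suc k')
      have "\<not> P k'" using not_less_Least[of k' P] Suc k_def by simp
      then show ?thesis using Suc by (simp add: P_def algebra_simps not_less)
    qed
    have "y \<in> B (int k)" unfolding B_def bucket_def D_def[symmetric] using ym Pk up by (simp add: P_def)
    moreover have "int k \<in> {0..J}" using kJ J0 by simp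
    ultimately show ?thesis unfolding S_def by blast
  qed
  have SG: "S \<subseteq> G"
  proof
    fix y assume "y \<in> S"
    then obtain j where j: "j \<in> {0..J}" "y \<in> B j" unfolding S_def by blast
    have lo: "2 powr (- (real_of_int j + 1) * et) < D y" and ym: "y \<in> bits m"
      using j(2) unfolding B_def D_def bucket_def by auto
    have "real_of_int j + 1 \<le> real_of_int J + 1" using j(1) by simp
    then have "2 powr (- (real_of_int J + 1) * et) \<le> 2 powr (- (real_of_int j + 1) * et)"
      by (rule expo_mono) (use et0 in auto)
    then have "a \<le> D y" using J1 lo by linarith
    then show "y \<in> G" unfolding G_def using ym by simp
  qed
  have GSH: "G - S \<subseteq> H"
  proof
    fix y assume y: "y \<in> G - S"
    then have ym: "y \<in> bits m" and Da: "a \<le> D y" unfolding G_def by auto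
    have "\<not> 2 powr (-(real_of_int J + 1)*et) < D y" using cover ym y by blast
    then have "D y \<le> 2 powr (-(real_of_int J + 1)*et)" by simp
    also have "\<dots> = 2 powr (- (real_of_int J + 2) * et) * 2 powr et" by (rule powr_split) (simp add: algebra_simps)
    also have "\<dots> \<le> a * 2 powr (28 * s)"
    proof (rule mult_mono)
      show "2 powr et \<le> 2 powr (28 * s)" using et_le_s s0 by simp
    qed (use J2 a0 in auto)
    also have "\<dots> \<le> a * (1 + 100 * s)" using two_powr_up[of s] s0 s1 a0 by simp
    finally have up: "D y \<le> (1 + 100 * s) * a" by (simp add: mult.commute)
    have "(1 - 100 * s) * a \<le> D y" using Da s0 a0 by (smt (verit) mult_le_cancel_right1)
    then show "y \<in> H" unfolding H_def using up ym by simp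
  qed
  have sumS: "(\<Sum>j\<in>{0..J}. hist n m C et t j) = sum D S"
  proof -
    have "(\<Sum>j\<in>{0..J}. hist n m C et t j) = (\<Sum>j\<in>{0..J}. sum D (B j))"
      by (rule sum.cong) (auto intro: hist_eq)
    also have "\<dots> = sum D S" unfolding S_def
      by (rule sum.UNION_disjoint[symmetric, OF _ finB Bdisj]) simp
    finally show ?thesis .
  qed
  have gH_eq: "gH n m C \<alpha> = sum D G" unfolding gH_def G_def D_def a_def ..
  have splitG: "sum D G = sum D (G - S) + sum D S" by (rule sum.subset_diff[OF SG finG])
  have GS_le: "sum D (G - S) \<le> e4"
  proof -
    have "sum D (G - S) \<le> sum D H" by (rule sum_mono2[OF finH GSH]) (use D0 in auto)
    then show ?thesis using hypH by linarith
  qed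
  have GS_ge: "0 \<le> sum D (G - S)" by (rule sum_nonneg) (use D0 in auto)
  have iii: "\<bar>(\<Sum>j\<in>{0..J}. hist n m C et t j) - gH n m C \<alpha>\<bar> \<le> e4"
    using sumS gH_eq splitG GS_le GS_ge by simp
  define X where "X = (\<Sum>j\<in>{0..J}. hist n m C et t j * 2 powr (real_of_int j * et))"
  have X_eq: "X = (\<Sum>j\<in>{0..J}. \<Sum>y\<in>B j. D y * 2 powr (real_of_int j * et))"
    unfolding X_def by (rule sum.cong) (auto simp: hist_eq sum_distrib_right)
  have cardS: "card S = (\<Sum>j\<in>{0..J}. card (B j))" unfolding S_def
    by (rule card_UN_disjoint[OF _ finB Bdisj]) simp
  have X_up: "X \<le> real (card S)"
  proof -
    have "X \<le> (\<Sum>j\<in>{0..J}. real (card (B j)))"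
      unfolding X_eq
    proof (rule sum_mono)
      fix j assume "j \<in> {0..J}"
      have "(\<Sum>y\<in>B j. D y * 2 powr (real_of_int j * et)) \<le> real (card (B j)) * 1"
      proof (rule sum_bounded_above)
        fix y assume "y \<in> B j"
        then have hi: "D y \<le> 2 powr (- real_of_int j * et)" unfolding B_def D_def bucket_def by auto
        have "D y * 2 powr (real_of_int j * et) \<le> 2 powr (- real_of_int j * et) * 2 powr (real_of_int j * et)"
          by (rule mult_right_mono[OF hi]) simp
        also have "\<dots> = 1" by (simp add: powr_add[symmetric])
        finally show "D y * 2 powr (real_of_int j * et) \<le> 1" .
      qed
      then show "(\<Sum>y\<in>B j. D y * 2 powr (real_of_int j * et)) \<le> real (card (B j))" by simp
    qed
    also have "\<dots> = real (card S)" using cardS by simp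
    finally show ?thesis .
  qed
  have X_lo: "real (card S) * 2 powr (- et) \<le> X"
  proof -
    have "(\<Sum>j\<in>{0..J}. real (card (B j)) * 2 powr (- et)) \<le> X"
      unfolding X_eq
    proof (rule sum_mono)
      fix j assume "j \<in> {0..J}"
      show "real (card (B j)) * 2 powr (- et) \<le> (\<Sum>y\<in>B j. D y * 2 powr (real_of_int j * et))"
      proof (rule sum_bounded_below)
        fix y assume "y \<in> B j"
        then have lo: "2 powr (- (real_of_int j + 1) * et) \<le> D y" unfolding B_def D_def bucket_def by auto
        have "2 powr (- et) = 2 powr (- (real_of_int j + 1) * et) * 2 powr (real_of_int j * et)"
          by (rule powr_split) (simp add: algebra_simps)
        also have "\<dots> \<le> D y * 2 powr (real_of_int j * et)"
          by (rule mult_right_mono[OF lo]) simp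
        finally show "2 powr (- et) \<le> D y * 2 powr (real_of_int j * et)" .
      qed
    qed
    moreover have "(\<Sum>j\<in>{0..J}. real (card (B j)) * 2 powr (- et)) = real (card S) * 2 powr (- et)"
      using cardS by (simp add: sum_distrib_right)
    ultimately show ?thesis by simp
  qed
  have cardG: "card G = card S + card (G - S)"
    using card_Diff_subset[OF finS SG] card_mono[OF finG SG] by simp
  have M0: "(0::real) < 2 ^ m" by simp
  have cGS: "real (card (G - S)) \<le> e4 * 2 ^ m"
  proof -
    have "real (card (G - S)) * a \<le> sum D (G - S)"
      by (rule sum_bounded_below) (auto simp: G_def)
    then have "real (card (G - S)) * 2 powr (- real m) \<le> e4"
      using GS_le mult_left_mono[OF a_ge, of "real (card (G - S))"] by (simp add: mult.commute) 
    then show ?thesis by (simp add: powr_minus powr_realpow divide_simps)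
  qed
  have cS: "real (card S) \<le> 2 ^ m"
  proof -
    have "card S \<le> card (bits m)" by (rule card_mono) (auto simp: S_def intro: Bsub[THEN subsetD])
    then show ?thesis by (simp add: card_bits)
  qed
  have q: "1 - 2 powr (- et) \<le> et"
  proof -
    have "et * ln 2 \<le> et" by (rule mult_left_le) (use ln2_le1 et0 in auto)
    then show ?thesis using two_powr_ge[of "- et"] by simp
  qed
  have q0: "0 \<le> 1 - 2 powr (- et)" using powr_le_cancel_iff[of 2 "- et" 0] et0 by simp
  have d1: "X - real (card G) \<le> 0" using X_up cardG by simp
  have d2: "real (card G) - X \<le> 2 ^ m * et + e4 * 2 ^ m"
  proof -
    have "real (card S) * (1 - 2 powr (- et)) \<le> 2 ^ m * et"
      by (rule mult_mono[OF cS q]) (use et0 q0 in auto)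
    then show ?thesis using X_lo cardG cGS by (simp add: algebra_simps)
  qed
  have gUH_eq: "gUH n m C \<alpha> = real (card G) / 2 ^ m" unfolding gUH_def G_def D_def a_def ..
  have iv: "\<bar>(1 / 2 ^ m) * X - gUH n m C \<alpha>\<bar> \<le> 4 * e4"
  proof -
    have "(1 / 2 ^ m) * X - gUH n m C \<alpha> = (X - real (card G)) / 2 ^ m" unfolding gUH_eq
      by (simp add: field_simps)
    also have "\<bar>\<dots>\<bar> = \<bar>X - real (card G)\<bar> / 2 ^ m" by simp
    also have "\<dots> \<le> (2 ^ m * et + e4 * 2 ^ m) / 2 ^ m"
      by (rule divide_right_mono) (use d1 d2 in auto)
    also have "\<dots> = et + e4" by (simp add: field_simps)
    also have "\<dots> \<le> 4 * e4" using e4_ge et0 by simp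
    finally show ?thesis .
  qed
  show ?thesis
    using i1 i2 ii iii iv unfolding s_def a_def J_def e4_def X_def by simp
qed

end
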